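(* Let $\epsilon,\epsilon_\theta\in[0,1]$ and $\theta\in\mathbb R$. If $\frac{2}{2-\epsilon}+\epsilon_\theta-2\ge 0$, then $\mathsf N^{\rm prono}$ (noise $\epsilon$) and $\mathsf Q_\theta^{\rm prono}$ (noise $\epsilon_\theta$) are jointly measurable. Moreover, if $\epsilon=\epsilon_\theta\ge 1/2$, they are jointly measurable.
   Context: All operators act on $\mathbb C^2$. The noisy projected number POVM: $\mathsf N^{\rm prono}_0=\begin{pmatrix}1-\epsilon/2&0\\0&\epsilon/2\end{pmatrix}$, $\mathsf N^{\rm prono}_1=\begin{pmatrix}\epsilon/2&0\\0&1-\epsilon/2\end{pmatrix}$. The noisy projected quadrature POVM on Borel $Y\subseteq\mathbb R$: $$\mathsf Q_\theta^{\rm prono}(Y)=\int_Y\begin{pmatrix}1&(1-\epsilon_\theta)\sqrt2\,y\,e^{-i\theta}\\(1-\epsilon_\theta)\sqrt2\,y\,e^{i\theta}&(1-\epsilon_\theta)2y^2+\epsilon_\theta\end{pmatrix}\frac{e^{-y^2}\,dy}{\sqrt\pi}.$$ Joint measurability means existence of a POVM $\mathsf G$ on $\{0,1\}\times\mathbb R$ with $\mathsf G(\{n\}\times\mathbb R)=\mathsf N^{\rm prono}_n$ and $\mathsf G(\{0,1\}\times Y)=\mathsf Q_\theta^{\rm prono}(Y)$. *)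

theory Defs
  imports "HOL-Analysis.Analysis"
begin

type_synonym cmat2 = "complex ^ 2 ^ 2"

definition psd :: "cmat2 \<Rightarrow> bool" where
  "psd A \<longleftrightarrow> (\<forall>v :: complex ^ 2.
      Im (\<Sum>i\<in>UNIV. cnj (v $ i) * (A *v v) $ i) = 0 \<and>
      Re (\<Sum>i\<in>UNIV. cnj (v $ i) * (A *v v) $ i) \<ge> 0)"

definition povm :: "'a measure \<Rightarrow> ('a set \<Rightarrow> cmat2) \<Rightarrow> bool" where
  "povm M G \<longleftrightarrow>
     (\<forall>A\<in>sets M. psd (G A)) \<and>
     G (space M) = mat 1 \<and>
     (\<forall>A :: nat \<Rightarrow> 'a set. range A \<subseteq> sets M \<longrightarrow> disjoint_family A \<longrightarrow>
        (\<lambda>k. G (A k)) sums G (\<Union>k. A k))"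

definition N_prono :: "real \<Rightarrow> nat \<Rightarrow> cmat2" where
  "N_prono eps n =
     (if n = 0 then vector [vector [complex_of_real (1 - eps/2), 0],
                             vector [0, complex_of_real (eps/2)]]
      else vector [vector [complex_of_real (eps/2), 0],
                   vector [0, complex_of_real (1 - eps/2)]])"

definition Q_dens :: "real \<Rightarrow> real \<Rightarrow> real \<Rightarrow> cmat2" where
  "Q_dens epsth th y =
     (let w = complex_of_real (exp (- (y\<^sup>2)) / sqrt pi) in
      vector [vector [w * 1, w * (complex_of_real ((1 - epsth) * sqrt 2 * y) * cis (- th))],
              vector [w * (complex_of_real ((1 - epsth) * sqrt 2 * y) * cis th),
                      w * complex_of_real ((1 - epsth) * 2 * y\<^sup>2 + epsth)]])"

definition Q_prono :: "real \<Rightarrow> real \<Rightarrow> real set \<Rightarrow> cmat2" where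
  "Q_prono epsth th Y = (\<chi> i j. set_lebesgue_integral lborel Y (\<lambda>y. Q_dens epsth th y $ i $ j))"

definition jointly_measurable_prono :: "real \<Rightarrow> real \<Rightarrow> real \<Rightarrow> bool" where
  "jointly_measurable_prono eps epsth th \<longleftrightarrow>
     (\<exists>G :: (nat \<times> real) set \<Rightarrow> cmat2.
        povm (count_space {0, 1} \<Otimes>\<^sub>M borel) G \<and>
        (\<forall>n\<in>{0, 1}. G ({n} \<times> UNIV) = N_prono eps n) \<and>
        (\<forall>Y\<in>sets borel. G ({0, 1} \<times> Y) = Q_prono epsth th Y))"

end

theory Submission
  imports Defs "HOL-Probability.Probability"
begin


definition wg :: "real \<Rightarrow> real" where "wg y = exp (- (y\<^sup>2)) / sqrt pi"

lemma wg_nd: "wg y = normal_density 0 (sqrt (1/2)) y"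
  by (simp add: wg_def normal_density_def)

lemma wg_int: "integrable lborel wg" "integral\<^sup>L lborel wg = 1"
  unfolding wg_nd[abs_def] by simp_all

lemma wg1: "integrable lborel (\<lambda>y. wg y * y)" "integral\<^sup>L lborel (\<lambda>y. wg y * y) = 0"
proof -
  have "(0::real) < sqrt (1/2)" by simp
  note A = integrable_normal_moment[OF this, of 0 1] integral_normal_moment_odd[OF this, of 0 0]
  show "integrable lborel (\<lambda>y. wg y * y)" "integral\<^sup>L lborel (\<lambda>y. wg y * y) = 0"
    using A unfolding wg_nd[abs_def] by simp_all
qed

lemma wg2: "integrable lborel (\<lambda>y. wg y * y^2)" "integral\<^sup>L lborel (\<lambda>y. wg y * y^2) = 1/2"
proof -
  have "(0::real) < sqrt (1/2)" by simp
  note A = integrable_normal_moment[OF this, of 0 2] integral_normal_moment_even[OF this, of 0 1]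
  show "integrable lborel (\<lambda>y. wg y * y^2)" "integral\<^sup>L lborel (\<lambda>y. wg y * y^2) = 1/2"
    using A unfolding wg_nd[abs_def] by simp_all
qed

definition E :: "real \<Rightarrow> real \<Rightarrow> real \<Rightarrow> complex \<Rightarrow> real \<Rightarrow> complex" where
  "E a b g c y = complex_of_real (wg y * (a + b*y + g*y^2)) * c"

lemma E_int: "integrable lborel (E a b g c)"
proof -
  have "integrable lborel (\<lambda>y. a * wg y + b * (wg y * y) + g * (wg y * y^2))"
    using wg_int wg1 wg2 by auto
  hence "integrable lborel (\<lambda>y. wg y * (a + b*y + g*y^2))"
    by (rule Bochner_Integration.integrable_cong[THEN iffD1, rotated 2]) (auto simp: algebra_simps)
  hence "integrable lborel (\<lambda>y. complex_of_real (wg y * (a + b*y + g*y^2)))"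
    by (rule integrable_of_real)
  thus ?thesis unfolding E_def[abs_def] by auto
qed

lemma E_integral: "integral\<^sup>L lborel (E a b g c) = complex_of_real (a + g/2) * c"
proof -
  have "integral\<^sup>L lborel (\<lambda>y. wg y * (a + b*y + g*y^2)) = integral\<^sup>L lborel (\<lambda>y. a * wg y + b * (wg y * y) + g * (wg y * y^2))"
    by (rule Bochner_Integration.integral_cong) (auto simp: algebra_simps)
  also have "\<dots> = a + g/2" using wg_int wg1 wg2 by simp
  finally show ?thesis unfolding E_def[abs_def] integral_mult_left_zero integral_complex_of_real by simp
qed



definition qf :: "complex^2 \<Rightarrow> cmat2 \<Rightarrow> complex" where
  "qf v A = (\<Sum>i\<in>UNIV. cnj (v $ i) * (A *v v) $ i)"

lemma qf_expand: "qf v A = cnj (v$1) * (A$1$1 * v$1 + A$1$2 * v$2) + cnj (v$2) * (A$2$1 * v$1 + A$2$2 * v$2)"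
  by (simp add: qf_def UNIV_2 matrix_vector_mult_def)

lemma psd_qf: "psd A \<longleftrightarrow> (\<forall>v. Im (qf v A) = 0 \<and> Re (qf v A) \<ge> 0)"
  by (simp add: psd_def qf_def)

lemma qf_add: "qf v (A + B) = qf v A + qf v B"
  by (simp add: qf_def matrix_vector_mult_add_rdistrib distrib_left sum.distrib)

lemma psd_add: "psd A \<Longrightarrow> psd B \<Longrightarrow> psd (A + B)"
  unfolding psd_qf qf_add by simp

definition Mint :: "real set \<Rightarrow> (real \<Rightarrow> cmat2) \<Rightarrow> cmat2" where
  "Mint S F = (\<chi> i j. set_lebesgue_integral lborel S (\<lambda>y. F y $ i $ j))"

lemma psd_Mint:
  assumes int: "\<And>i j. integrable lborel (\<lambda>y. F y $ i $ j)" and S: "S \<in> sets borel"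
    and p: "\<And>y. psd (F y)"
  shows "psd (Mint S F)"
  unfolding psd_qf
proof
  fix v
  have ii: "integrable lborel (\<lambda>y. indicator S y *\<^sub>R F y $ i $ j)" for i j
    using integrable_mult_indicator[of S lborel "\<lambda>y. F y $ i $ j"] int S by simp
  have "qf v (Mint S F) = set_lebesgue_integral lborel S (\<lambda>y. qf v (F y))"
  proof -
    define g where "g i j y = indicator S y *\<^sub>R F y $ i $ j" for i j y
    have gi: "integrable lborel (g i j)" for i j using ii unfolding g_def .
    have "(\<lambda>y. indicator S y *\<^sub>R qf v (F y)) = (\<lambda>y. cnj (v$1) * (g 1 1 y * v$1 + g 1 2 y * v$2) + cnj (v$2) * (g 2 1 y * v$1 + g 2 2 y * v$2))"
      by (rule ext) (simp add: g_def qf_expand scaleR_conv_of_real algebra_simps)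
    then have "set_lebesgue_integral lborel S (\<lambda>y. qf v (F y)) = integral\<^sup>L lborel (\<lambda>y. cnj (v$1) * (g 1 1 y * v$1 + g 1 2 y * v$2) + cnj (v$2) * (g 2 1 y * v$1 + g 2 2 y * v$2))"
      unfolding set_lebesgue_integral_def by simp
    also have "\<dots> = cnj (v$1) * (integral\<^sup>L lborel (g 1 1) * v$1 + integral\<^sup>L lborel (g 1 2) * v$2) + cnj (v$2) * (integral\<^sup>L lborel (g 2 1) * v$1 + integral\<^sup>L lborel (g 2 2) * v$2)"
      using gi by simp
    finally show ?thesis unfolding qf_expand Mint_def set_lebesgue_integral_def g_def by simp
  qed
  also have "\<dots> = set_lebesgue_integral lborel S (\<lambda>y. complex_of_real (Re (qf v (F y))))"
    using p S unfolding psd_qf by (intro set_lebesgue_integral_cong) (auto simp: complex_eq_iff)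
  also have "\<dots> = complex_of_real (set_lebesgue_integral lborel S (\<lambda>y. Re (qf v (F y))))"
    by (rule set_integral_complex_of_real)
  finally have eq: "qf v (Mint S F) = complex_of_real (set_lebesgue_integral lborel S (\<lambda>y. Re (qf v (F y))))" .
  have "set_lebesgue_integral lborel S (\<lambda>y. Re (qf v (F y))) \<ge> 0"
    unfolding set_lebesgue_integral_def
    by (rule Bochner_Integration.integral_nonneg) (simp add: indicator_def p[unfolded psd_qf])
  thus "Im (qf v (Mint S F)) = 0 \<and> Re (qf v (Mint S F)) \<ge> 0" using eq by simp
qed

lemma vec_sumsI: assumes "\<And>i. (\<lambda>k. f k $ i) sums a $ i" shows "f sums a"
  using assms unfolding sums_def by (intro vec_tendstoI) (simp add: sum_component)



definition dd :: "real \<Rightarrow> real" where "dd epsth = (1 - epsth) / 2"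
definition aa :: "real \<Rightarrow> real \<Rightarrow> nat \<Rightarrow> real" where
  "aa eps epsth n = (if n = 0 then 1 - eps/2 - dd epsth else eps/2 - dd epsth)"
definition bb :: "real \<Rightarrow> real \<Rightarrow> nat \<Rightarrow> real" where
  "bb eps epsth n = (if n = 0 then eps/2 - dd epsth else 1 - eps/2 - dd epsth)"

definition gd :: "real \<Rightarrow> real \<Rightarrow> real \<Rightarrow> nat \<Rightarrow> real \<Rightarrow> cmat2" where
  "gd eps epsth th n y =
     vector [vector [E (dd epsth + aa eps epsth n) 0 0 1 y, E 0 (dd epsth * sqrt 2) 0 (cis (-th)) y],
             vector [E 0 (dd epsth * sqrt 2) 0 (cis th) y, E (bb eps epsth n) 0 (2 * dd epsth) 1 y]]"

lemma gd_int: "integrable lborel (\<lambda>y. gd eps epsth th n y $ i $ j)"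
proof -
  have "i = 1 \<or> i = 2" "j = 1 \<or> j = 2" using exhaust_2 by auto
  thus ?thesis by (auto simp: gd_def E_int)
qed

lemma gd_qf:
  "qf v (gd eps epsth th n y) = complex_of_real (wg y * (dd epsth * (cmod (v$1 + complex_of_real (sqrt 2 * y) * cis (-th) * v$2))\<^sup>2
      + aa eps epsth n * (cmod (v$1))\<^sup>2 + bb eps epsth n * (cmod (v$2))\<^sup>2))"
proof -
  define s where "s = v$1 + complex_of_real (sqrt 2 * y) * cis (-th) * v$2"
  have cs: "cnj s = cnj (v$1) + complex_of_real (sqrt 2 * y) * cis th * cnj (v$2)"
    by (simp add: s_def cis_cnj)
  have c: "cis (-th) * cis th = 1" by (simp add: cis_mult)
  have r: "complex_of_real (sqrt 2) * complex_of_real (sqrt 2) = 2"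
    by (simp flip: of_real_mult)
  have "qf v (gd eps epsth th n y) = complex_of_real (wg y) * (complex_of_real (dd epsth) * (s * cnj s)
      + complex_of_real (aa eps epsth n) * (v$1 * cnj (v$1)) + complex_of_real (bb eps epsth n) * (v$2 * cnj (v$2)))"
    unfolding cs unfolding s_def qf_expand gd_def E_def
    using c r by (simp add: power2_eq_square) algebra
  also have "\<dots> = complex_of_real (wg y * (dd epsth * (cmod s)\<^sup>2
      + aa eps epsth n * (cmod (v$1))\<^sup>2 + bb eps epsth n * (cmod (v$2))\<^sup>2))"
    by (simp only: of_real_mult of_real_add complex_norm_square)
  finally show ?thesis unfolding s_def .
qed

lemma gd_psd:
  assumes "0 \<le> eps" "eps \<le> 1" "epsth \<le> 1" "1 \<le> eps + epsth" "n \<in> {0,1}"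
  shows "psd (gd eps epsth th n y)"
  unfolding psd_qf gd_qf
proof
  fix v
  have w: "wg y \<ge> 0" by (simp add: wg_def)
  have "dd epsth \<ge> 0" "aa eps epsth n \<ge> 0" "bb eps epsth n \<ge> 0"
    using assms by (auto simp: dd_def aa_def bb_def)
  with w show "Im (complex_of_real (wg y * (dd epsth * (cmod (v$1 + complex_of_real (sqrt 2 * y) * cis (-th) * v$2))\<^sup>2
      + aa eps epsth n * (cmod (v$1))\<^sup>2 + bb eps epsth n * (cmod (v$2))\<^sup>2))) = 0 \<and>
    0 \<le> Re (complex_of_real (wg y * (dd epsth * (cmod (v$1 + complex_of_real (sqrt 2 * y) * cis (-th) * v$2))\<^sup>2
      + aa eps epsth n * (cmod (v$1))\<^sup>2 + bb eps epsth n * (cmod (v$2))\<^sup>2)))"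
    by simp
qed

lemma mat2_eqI: "(A::cmat2) $ 1 $ 1 = B $ 1 $ 1 \<Longrightarrow> A $ 1 $ 2 = B $ 1 $ 2 \<Longrightarrow> A $ 2 $ 1 = B $ 2 $ 1 \<Longrightarrow> A $ 2 $ 2 = B $ 2 $ 2 \<Longrightarrow> A = B"
  by (simp add: vec_eq_iff forall_2)

lemma gd_total: "n \<in> {0,1} \<Longrightarrow> Mint UNIV (gd eps epsth th n) = N_prono eps n"
  apply (rule mat2_eqI)
  apply (simp_all add: Mint_def set_lebesgue_integral_def)
  apply (simp_all only: gd_def vector_2 E_integral)
  apply (auto simp: N_prono_def aa_def bb_def dd_def)
  done

lemma gd_sum: "gd eps epsth th 0 y + gd eps epsth th 1 y = Q_dens epsth th y"
  apply (rule mat2_eqI)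
  apply (auto simp: gd_def Q_dens_def E_def aa_def bb_def dd_def Let_def wg_def algebra_simps)
  apply (simp_all add: field_simps)
  done



lemma set_integral_sums:
  fixes f :: "_ \<Rightarrow> 'a :: {banach, second_countable_topology}"
  assumes meas[intro]: "\<And>i::nat. A i \<in> sets M"
    and disj: "\<And>i j. i \<noteq> j \<Longrightarrow> A i \<inter> A j = {}"
    and intgbl: "set_integrable M (\<Union>i. A i) f"
  shows "(\<lambda>i. set_lebesgue_integral M (A i) f) sums set_lebesgue_integral M (\<Union>i. A i) f"
    unfolding set_lebesgue_integral_def
proof -
  have int_A: "integrable M (\<lambda>x. indicat_real (A i) x *\<^sub>R f x)" for i
    using intgbl unfolding set_integrable_def [symmetric]
    by (rule set_integrable_subset) auto
  { fix x assume "x \<in> space M"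
    have "(\<lambda>i. indicator (A i) x *\<^sub>R f x) sums (indicator (\<Union>i. A i) x *\<^sub>R f x)"
      by (intro sums_scaleR_left indicator_sums) fact }
  note sums = this

  have norm_f: "\<And>i. set_integrable M (A i) (\<lambda>x. norm (f x))"
    using int_A[THEN integrable_norm] unfolding set_integrable_def by auto

  have s1: "AE x in M. summable (\<lambda>i. norm (indicator (A i) x *\<^sub>R f x))"
    using disj by (intro AE_I2) (auto intro!: summable_mult2 sums_summable[OF indicator_sums])

  have s2: "summable (\<lambda>i. LINT x|M. norm (indicator (A i) x *\<^sub>R f x))"
  proof (rule summableI_nonneg_bounded)
    fix n
    show "0 \<le> LINT x|M. norm (indicator (A n) x *\<^sub>R f x)"
      using norm_f by (auto intro!: integral_nonneg_AE)

    have "(\<Sum>i<n. LINT x|M. norm (indicator (A i) x *\<^sub>R f x)) = (\<Sum>i<n. set_lebesgue_integral M (A i) (\<lambda>x. norm (f x)))"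
      by (simp add: abs_mult set_lebesgue_integral_def)
    also have "\<dots> = set_lebesgue_integral M (\<Union>i<n. A i) (\<lambda>x. norm (f x))"
      using norm_f
      by (subst set_integral_finite_Union) (auto simp: disjoint_family_on_def disj)
    also have "\<dots> \<le> set_lebesgue_integral M (\<Union>i. A i) (\<lambda>x. norm (f x))"
      using intgbl[unfolded set_integrable_def, THEN integrable_norm] norm_f
      unfolding set_lebesgue_integral_def set_integrable_def
      apply (intro integral_mono set_integrable_UN[of "{..<n}", unfolded set_integrable_def])
          apply (auto split: split_indicator)
      done
    finally show "(\<Sum>i<n. LINT x|M. norm (indicator (A i) x *\<^sub>R f x)) \<le>
      set_lebesgue_integral M (\<Union>i. A i) (\<lambda>x. norm (f x))"
      by simp
  qed
  have eq: "LINT x|M. indicator (\<Union>(A ` UNIV)) x *\<^sub>R f x = LINT x|M. (\<Sum>i. indicator (A i) x *\<^sub>R f x)"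
  proof (rule Bochner_Integration.integral_cong[OF refl])
    fix x assume "x \<in> space M"
    from sums[OF this] show "indicator (\<Union>(A ` UNIV)) x *\<^sub>R f x = (\<Sum>i. indicator (A i) x *\<^sub>R f x)"
      by (rule sums_unique)
  qed
  show "(\<lambda>i. LINT x|M. indicator (A i) x *\<^sub>R f x) sums (LINT x|M. indicator (\<Union>i. A i) x *\<^sub>R f x)"
    unfolding eq by (rule sums_integral[OF int_A s1 s2])
qed



definition GG :: "real \<Rightarrow> real \<Rightarrow> real \<Rightarrow> (nat \<times> real) set \<Rightarrow> cmat2" where
  "GG eps epsth th A = Mint (Pair 0 -` A) (gd eps epsth th 0) + Mint (Pair 1 -` A) (gd eps epsth th 1)"

lemma Mint_sums:
  assumes B: "\<And>k. B k \<in> sets borel" and dj: "disjoint_family B"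
  shows "(\<lambda>k. Mint (B k) (gd eps epsth th n)) sums Mint (\<Union>k. B k) (gd eps epsth th n)"
proof (rule vec_sumsI, rule vec_sumsI)
  fix i j
  have U: "(\<Union>k. B k) \<in> sets lborel" using B by auto
  have "(\<lambda>k. set_lebesgue_integral lborel (B k) (\<lambda>y. gd eps epsth th n y $ i $ j)) sums
        set_lebesgue_integral lborel (\<Union>k. B k) (\<lambda>y. gd eps epsth th n y $ i $ j)"
  proof (rule set_integral_sums)
    show "B k \<in> sets lborel" for k using B by simp
    show "k \<noteq> l \<Longrightarrow> B k \<inter> B l = {}" for k l using dj by (auto simp: disjoint_family_on_def)
    show "set_integrable lborel (\<Union>k. B k) (\<lambda>y. gd eps epsth th n y $ i $ j)"
      unfolding set_integrable_def by (rule integrable_mult_indicator[OF U gd_int])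
  qed
  thus "(\<lambda>k. Mint (B k) (gd eps epsth th n) $ i $ j) sums Mint (\<Union>k. B k) (gd eps epsth th n) $ i $ j"
    by (simp add: Mint_def)
qed

lemma Mint_empty: "Mint {} F = 0"
  by (simp add: Mint_def vec_eq_iff set_lebesgue_integral_def)

lemma jm:
  assumes h: "0 \<le> eps" "eps \<le> 1" "epsth \<le> 1" "1 \<le> eps + epsth"
  shows "jointly_measurable_prono eps epsth th"
  unfolding jointly_measurable_prono_def povm_def
proof (intro exI[of _ "GG eps epsth th"] conjI ballI allI impI)
  let ?M = "count_space {0::nat, 1} \<Otimes>\<^sub>M (borel :: real measure)"
  have sp: "space ?M = {0,1} \<times> UNIV" by (simp add: space_pair_measure)
  have gpsd: "psd (gd eps epsth th n y)" if "n \<in> {0,1}" for n y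
    using gd_psd[OF h(1,2,3,4) that] .
  show "psd (GG eps epsth th A)" if A: "A \<in> sets ?M" for A
    unfolding GG_def
    by (intro psd_add psd_Mint gd_int gpsd sets_Pair1[OF A]) auto
  show "GG eps epsth th (space ?M) = mat 1"
  proof -
    have "Pair 0 -` space ?M = UNIV" "Pair 1 -` space ?M = UNIV" unfolding sp by auto
    hence "GG eps epsth th (space ?M) = N_prono eps 0 + N_prono eps 1"
      unfolding GG_def using gd_total by simp
    also have "\<dots> = mat 1"
      by (rule mat2_eqI) (simp_all add: N_prono_def mat_def)
    finally show ?thesis .
  qed
  show "(\<lambda>k. GG eps epsth th (A k)) sums GG eps epsth th (\<Union>k. A k)"
    if A: "range A \<subseteq> sets ?M" and dj: "disjoint_family A" for A
  proof -
    have S: "Pair n -` A k \<in> sets borel" for n k using A sets_Pair1[of "A k"] by auto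
    have D: "disjoint_family (\<lambda>k. Pair n -` A k)" for n
      using dj by (auto simp: disjoint_family_on_def)
    have V: "Pair n -` (\<Union>k. A k) = (\<Union>k. Pair n -` A k)" for n by auto
    show ?thesis unfolding GG_def V
      by (intro sums_add Mint_sums S D)
  qed
  show "GG eps epsth th ({n} \<times> UNIV) = N_prono eps n" if n: "n \<in> {0,1}" for n
  proof -
    have e: "Pair m -` ({n} \<times> UNIV) = (if m = n then UNIV else {})" for m by auto
    show ?thesis using n unfolding GG_def e by (auto simp: Mint_empty gd_total)
  qed
  show "GG eps epsth th ({0, 1} \<times> Y) = Q_prono epsth th Y" if Y: "Y \<in> sets borel" for Y
  proof -
    have e: "Pair 0 -` ({0,1} \<times> Y) = Y" "Pair 1 -` ({0,1} \<times> Y) = Y" by auto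
    have si: "set_integrable lborel Y (\<lambda>y. gd eps epsth th n y $ i $ j)" for n i j
      unfolding set_integrable_def using Y by (intro integrable_mult_indicator gd_int) auto
    have eqij: "set_lebesgue_integral lborel Y (\<lambda>y. gd eps epsth th 0 y $ i $ j) + set_lebesgue_integral lborel Y (\<lambda>y. gd eps epsth th 1 y $ i $ j)
          = set_lebesgue_integral lborel Y (\<lambda>y. Q_dens epsth th y $ i $ j)" for i j
    proof -
      have "set_lebesgue_integral lborel Y (\<lambda>y. gd eps epsth th 0 y $ i $ j) + set_lebesgue_integral lborel Y (\<lambda>y. gd eps epsth th 1 y $ i $ j)
          = set_lebesgue_integral lborel Y (\<lambda>y. gd eps epsth th 0 y $ i $ j + gd eps epsth th 1 y $ i $ j)"
        using si by (simp add: set_integral_add)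
      also have "\<dots> = set_lebesgue_integral lborel Y (\<lambda>y. Q_dens epsth th y $ i $ j)"
      proof -
        have "(gd eps epsth th 0 y + gd eps epsth th 1 y) $ i $ j = Q_dens epsth th y $ i $ j" for y
          by (simp only: gd_sum)
        thus ?thesis by simp
      qed
      finally show "set_lebesgue_integral lborel Y (\<lambda>y. gd eps epsth th 0 y $ i $ j) + set_lebesgue_integral lborel Y (\<lambda>y. gd eps epsth th 1 y $ i $ j)
          = set_lebesgue_integral lborel Y (\<lambda>y. Q_dens epsth th y $ i $ j)" .
    qed
    show ?thesis unfolding GG_def e Q_prono_def Mint_def
      using eqij by (simp add: vec_eq_iff)
  qed
qed

theorem mainTheorem8:
  fixes eps epsth th :: real
  assumes "0 \<le> eps" "eps \<le> 1" "0 \<le> epsth" "epsth \<le> 1"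
  shows "(2 / (2 - eps) + epsth - 2 \<ge> 0 \<longrightarrow> jointly_measurable_prono eps epsth th)
       \<and> (eps = epsth \<and> eps \<ge> 1/2 \<longrightarrow> jointly_measurable_prono eps epsth th)"
proof (intro conjI impI)
  assume c: "2 / (2 - eps) + epsth - 2 \<ge> 0"
  have p: "2 - eps > 0" using assms by simp
  have "(1 + eps) * (2 - eps) = 2 + eps * (1 - eps)" by (simp add: algebra_simps)
  moreover have "eps * (1 - eps) \<ge> 0" using assms by simp
  ultimately have "2 \<le> (1 + eps) * (2 - eps)" by linarith
  hence "2 / (2 - eps) \<le> 1 + eps" using p by (simp add: divide_le_eq)
  hence "1 \<le> eps + epsth" using c by linarith
  thus "jointly_measurable_prono eps epsth th" using jm assms by simp
next
  assume "eps = epsth \<and> eps \<ge> 1/2"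
  hence "1 \<le> eps + epsth" by simp
  thus "jointly_measurable_prono eps epsth th" using jm assms by simp
qed


end
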